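(* Let $\omega_c>0$. For $\nu>0$, $k\in\mathbb Z^3$ and $t\ge0$ define $$S(t,k)=\exp\Big[-\nu\int_0^t|k_3|^2\Big(\frac{1-e^{-\nu(t-s)}}{\nu}\Big)^2ds\Big]\exp\Big[-\frac{\nu|k_\perp|^2}{\nu^2+\omega_c^2}\int_0^t\Big(\big[1-\cos\omega_c(t-s)\,e^{-\nu(t-s)}\big]^2+e^{-2\nu(t-s)}\sin^2\omega_c(t-s)\Big)ds\Big].$$ Then there exist $\nu_1>0$ and $\delta_0>0$ such that for all $\nu\in(0,\nu_1)$ and all $k$ with $k_3\neq0$, the function $t\mapsto S(t,k)$ is strictly decreasing on $[0,\infty)$ and for all $t\ge0$ $$0<S(t,k)\le\exp\big(-\delta_0\min(\nu k_3^2t^3,\nu^{-1}k_3^2t)\big)\exp\big(-\delta_0\nu|k_\perp|^2\min(t^3,t)\big).$$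
   Context: $k_\perp=(k_1,k_2,0)$, $|k_\perp|^2=k_1^2+k_2^2$. $S$ is the collisional damping factor along the characteristics of the Fourier-transformed linearized Vlasov–Fokker–Planck equation in a uniform magnetic field with cyclotron frequency $\omega_c$ and collision frequency $\nu$. *)

theory Defs
  imports "HOL-Analysis.Analysis"
begin

definition dampS :: "real \<Rightarrow> real \<Rightarrow> real \<Rightarrow> int \<Rightarrow> int \<Rightarrow> int \<Rightarrow> real" where
  "dampS wc nu t k1 k2 k3 =
     exp (- nu * integral {0..t}
            (\<lambda>s. (real_of_int k3)\<^sup>2 * ((1 - exp (- nu * (t - s))) / nu)\<^sup>2))
   * exp (- (nu * (real_of_int k1 ^ 2 + real_of_int k2 ^ 2) / (nu\<^sup>2 + wc\<^sup>2))
          * integral {0..t}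
            (\<lambda>s. (1 - cos (wc * (t - s)) * exp (- nu * (t - s)))\<^sup>2
                 + exp (- 2 * nu * (t - s)) * (sin (wc * (t - s)))\<^sup>2))"

end

theory Submission
  imports Defs
begin


lemma rev_int:
  fixes F :: "real \<Rightarrow> real"
  assumes "continuous_on UNIV F" "0 \<le> t"
  shows "integral {0..t} (\<lambda>s. F (t - s)) = integral {0..t} F"
proof -
  have "(F has_integral integral {0..t} F) (cbox 0 t)"
    using integrable_continuous_interval[OF continuous_on_subset[OF assms(1)], of 0 t]
    by (simp add: integrable_integral)
  from has_integral_affinity[OF this, of "-1" t]
  have "((\<lambda>x. F (- x + t)) has_integral integral {0..t} F) ((\<lambda>x. - x + t) ` {0..t})"
    by simp
  moreover have "(\<lambda>x. - x + t) ` {0..t} = {0..t}"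
  proof
    show "(\<lambda>x. - x + t) ` {0..t} \<subseteq> {0..t}" by auto
    show "{0..t} \<subseteq> (\<lambda>x. - x + t) ` {0..t}"
    proof
      fix y assume "y \<in> {0..t}"
      then show "y \<in> (\<lambda>x. - x + t) ` {0..t}" by (intro image_eqI[of _ _ "t - y"]) auto
    qed
  qed
  ultimately show ?thesis by (simp add: integral_unique)
qed

lemma int_mono:
  fixes f :: "real \<Rightarrow> real"
  assumes "continuous_on UNIV f" "\<And>x. 0 \<le> x \<Longrightarrow> 0 \<le> f x" "0 \<le> a" "a \<le> b"
  shows "integral {0..a} f \<le> integral {0..b} f"
proof -
  have "integral {0..b} f = integral {0..a} f + integral {a..b} f"
    using assms Henstock_Kurzweil_Integration.integral_combine[where a=0 and c=a and b=b and f=f] integrable_continuous_interval[OF continuous_on_subset[OF assms(1)], of 0 b] by simp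
  moreover have "0 \<le> integral {a..b} f"
    using assms by (intro integral_nonneg integrable_continuous_interval continuous_on_subset[OF assms(1)]) auto
  ultimately show ?thesis by simp
qed

lemma int_lower:
  fixes f :: "real \<Rightarrow> real"
  assumes "continuous_on UNIV f" "\<And>x. 0 \<le> x \<Longrightarrow> 0 \<le> f x"
    "\<And>x y. 0 \<le> x \<Longrightarrow> x \<le> y \<Longrightarrow> f x \<le> f y" "0 \<le> a" "a < b"
  shows "integral {a..b} f \<ge> (b - a) / 2 * f ((a + b) / 2)"
proof -
  let ?m = "(a + b) / 2"
  have I: "\<And>u v. f integrable_on {u..v}" by (intro integrable_continuous_interval continuous_on_subset[OF assms(1)]) auto
  have "integral {a..b} f = integral {a..?m} f + integral {?m..b} f"
    using assms I Henstock_Kurzweil_Integration.integral_combine[where a=a and c="?m" and b=b and f=f] by simp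
  moreover have "0 \<le> integral {a..?m} f"
    using assms I by (intro integral_nonneg) auto
  moreover have "integral {?m..b} (\<lambda>_. f ?m) \<le> integral {?m..b} f"
    using assms I by (intro integral_le) auto
  moreover have "integral {?m..b} (\<lambda>_. f ?m) = (b - a) / 2 * f ?m"
  proof -
    have "integral {?m..b} (\<lambda>_. f ?m) = (b - ?m) * f ?m"
      using assms by simp
    moreover have "b - ?m = (b - a) / 2" by (simp add: field_simps)
    ultimately show ?thesis by simp
  qed
  ultimately show ?thesis by linarith
qed

lemma cos_lb: fixes x :: real assumes "0 \<le> x" shows "1 - x^2/2 \<le> cos x"
proof -
  let ?f = "\<lambda>x. cos x - 1 + x^2/2"
  have "\<exists>y. DERIV ?f u :> y \<and> y \<ge> 0" if "0 \<le> u" "u \<le> x" for u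
  proof (intro exI conjI)
    show "DERIV ?f u :> (u - sin u)"
      by (auto intro!: derivative_eq_intros simp: power2_eq_square power_numeral_reduce algebra_simps)
    show "u - sin u \<ge> 0" using sin_x_le_x[OF that(1)] by simp
  qed
  then have "?f 0 \<le> ?f x" by (rule DERIV_nonneg_imp_nondecreasing[OF assms])
  then show ?thesis by simp
qed

lemma sin_lb: fixes x :: real assumes "0 \<le> x" shows "x - x^3/6 \<le> sin x"
proof -
  let ?f = "\<lambda>x. sin x - x + x^3/6"
  have "\<exists>y. DERIV ?f u :> y \<and> y \<ge> 0" if "0 \<le> u" "u \<le> x" for u
  proof (intro exI conjI)
    show "DERIV ?f u :> (cos u - 1 + u^2/2)"
      by (auto intro!: derivative_eq_intros simp: power2_eq_square power_numeral_reduce algebra_simps)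
    show "cos u - 1 + u^2/2 \<ge> 0" using cos_lb[OF that(1)] by simp
  qed
  then have "?f 0 \<le> ?f x" by (rule DERIV_nonneg_imp_nondecreasing[OF assms])
  then show ?thesis by simp
qed

lemma cos_ub: fixes x :: real assumes "0 \<le> x" shows "cos x \<le> 1 - x^2/2 + x^4/24"
proof -
  let ?f = "\<lambda>x. 1 - x^2/2 + x^4/24 - cos x"
  have "\<exists>y. DERIV ?f u :> y \<and> y \<ge> 0" if "0 \<le> u" "u \<le> x" for u
  proof (intro exI conjI)
    show "DERIV ?f u :> (- u + u^3/6 + sin u)"
      by (auto intro!: derivative_eq_intros simp: power2_eq_square power_numeral_reduce algebra_simps)
    show "- u + u^3/6 + sin u \<ge> 0" using sin_lb[OF that(1)] by simp
  qed
  then have "?f 0 \<le> ?f x" by (rule DERIV_nonneg_imp_nondecreasing[OF assms])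
  then show ?thesis by simp
qed

lemma sin_ub: fixes x :: real assumes "0 \<le> x" shows "sin x \<le> x - x^3/6 + x^5/120"
proof -
  let ?f = "\<lambda>x. x - x^3/6 + x^5/120 - sin x"
  have "\<exists>y. DERIV ?f u :> y \<and> y \<ge> 0" if "0 \<le> u" "u \<le> x" for u
  proof (intro exI conjI)
    show "DERIV ?f u :> (1 - u^2/2 + u^4/24 - cos u)"
      by (auto intro!: derivative_eq_intros simp: power2_eq_square power_numeral_reduce algebra_simps)
    show "1 - u^2/2 + u^4/24 - cos u \<ge> 0" using cos_ub[OF that(1)] by simp
  qed
  then have "?f 0 \<le> ?f x" by (rule DERIV_nonneg_imp_nondecreasing[OF assms])
  then show ?thesis by simp
qed

lemma x_sin: fixes x :: real assumes "0 \<le> x" shows "min (x^3) x / 15 \<le> x - sin x"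
proof (cases "x \<le> 2")
  case True
  have "x^5 = x^3 * x^2" by algebra
  moreover have "x^2 \<le> 4" using power_mono[OF True assms, of 2] by simp
  moreover have "0 \<le> x^3" using assms by simp
  ultimately have "x^3 * x^2 \<le> x^3 * 4" by (intro mult_left_mono) auto
  with \<open>x^5 = x^3 * x^2\<close> have "x^5 \<le> 4 * x^3" by simp
  then have "x^3 / 15 \<le> x - sin x" using sin_ub[OF assms] \<open>0 \<le> x^3\<close> by linarith
  moreover have "min (x^3) x \<le> x^3" by simp
  ultimately show ?thesis by linarith
next
  case False
  have "min (x^3) x \<le> x" by simp
  then show ?thesis using sin_le_one[of x] False by linarith
qed

definition gfun :: "real \<Rightarrow> real \<Rightarrow> real \<Rightarrow> real" where
  "gfun nu K u = K * ((1 - exp (- nu * u)) / nu)\<^sup>2"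

definition hfun :: "real \<Rightarrow> real \<Rightarrow> real \<Rightarrow> real" where
  "hfun wc nu u = (1 - cos (wc * u) * exp (- nu * u))\<^sup>2 + exp (- 2 * nu * u) * (sin (wc * u))\<^sup>2"

lemma gfun_cont: "nu > 0 \<Longrightarrow> continuous_on UNIV (gfun nu K)"
  unfolding gfun_def by (intro continuous_intros) auto

lemma hfun_cont: "continuous_on UNIV (hfun wc nu)"
  unfolding hfun_def by (intro continuous_intros)

lemma gfun_nonneg: "K \<ge> 0 \<Longrightarrow> 0 \<le> gfun nu K u"
  unfolding gfun_def by simp

lemma hfun_nonneg: "0 \<le> hfun wc nu u"
  unfolding hfun_def by simp

lemma gfun_mono:
  assumes "nu > 0" "K \<ge> 0" "0 \<le> x" "x \<le> y"
  shows "gfun nu K x \<le> gfun nu K y"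
proof -
  have "exp (- nu * y) \<le> exp (- nu * x)" using assms by (simp add: mult_left_mono)
  moreover have "exp (- nu * x) \<le> 1" using assms by simp
  ultimately have "(1 - exp (- nu * x)) / nu \<le> (1 - exp (- nu * y)) / nu"
    and "0 \<le> (1 - exp (- nu * x)) / nu"
    using assms by (auto intro: divide_right_mono)
  then have "((1 - exp (- nu * x)) / nu)\<^sup>2 \<le> ((1 - exp (- nu * y)) / nu)\<^sup>2"
    by (intro power_mono) auto
  then show ?thesis unfolding gfun_def using assms by (intro mult_left_mono) auto
qed

lemma exp_lb: fixes x :: real assumes "0 \<le> x" shows "x / (1 + x) \<le> 1 - exp (- x)"
proof -
  have "1 + x \<le> exp x" by simp
  then have "exp (- x) \<le> 1 / (1 + x)" using assms
    by (simp add: exp_minus divide_simps) 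
  moreover have "1 - 1 / (1 + x) = x / (1 + x)" using assms by (simp add: field_simps)
  ultimately show ?thesis by linarith
qed

lemma gfun_lower:
  assumes "nu > 0" "K \<ge> 0" "0 \<le> u"
  shows "K * (u / (1 + nu * u))\<^sup>2 \<le> gfun nu K u"
proof -
  have "(nu * u) / (1 + nu * u) \<le> 1 - exp (- (nu * u))" using assms by (intro exp_lb) simp
  then have "(nu * u) / (1 + nu * u) / nu \<le> (1 - exp (- nu * u)) / nu"
    using assms by (intro divide_right_mono) auto
  moreover have "(nu * u) / (1 + nu * u) / nu = u / (1 + nu * u)" using assms by simp
  ultimately have "u / (1 + nu * u) \<le> (1 - exp (- nu * u)) / nu" by simp
  moreover have "0 \<le> u / (1 + nu * u)" using assms by simp
  ultimately have "(u / (1 + nu * u))\<^sup>2 \<le> ((1 - exp (- nu * u)) / nu)\<^sup>2"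
    by (intro power_mono) auto
  then show ?thesis unfolding gfun_def using assms by (intro mult_left_mono) auto
qed

lemma gfun_pos:
  assumes "nu > 0" "K > 0" "u > 0"
  shows "gfun nu K u > 0"
proof -
  have "exp (- nu * u) < 1" using assms by simp
  then show ?thesis unfolding gfun_def using assms by simp
qed

lemma hfun_lower:
  assumes "nu > 0" "0 \<le> u"
  shows "2/9 * (1 - cos (wc * u)) \<le> hfun wc nu u"
proof -
  define E where "E = exp (- nu * u)"
  define c where "c = cos (wc * u)"
  define s where "s = sin (wc * u)"
  have E0: "0 \<le> E" unfolding E_def by simp
  have E2: "exp (- 2 * nu * u) = E\<^sup>2" unfolding E_def by (simp add: power2_eq_square exp_add[symmetric])
  have cs: "c\<^sup>2 + s\<^sup>2 = 1" unfolding c_def s_def by simp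
  have c1: "c \<le> 1" "-1 \<le> c" unfolding c_def by auto
  have "hfun wc nu u = (1 - c * E)\<^sup>2 + E\<^sup>2 * s\<^sup>2" unfolding hfun_def E2 c_def s_def E_def by simp
  also have "\<dots> = (1 - E)\<^sup>2 + 2 * E * (1 - c)"
  proof -
    have "s\<^sup>2 = 1 - c\<^sup>2" using cs by simp
    then have "(1 - c * E)\<^sup>2 + E\<^sup>2 * s\<^sup>2 = (1 - c * E)\<^sup>2 + E\<^sup>2 * (1 - c\<^sup>2)" by simp
    also have "\<dots> = (1 - E)\<^sup>2 + 2 * E * (1 - c)" by algebra
    finally show ?thesis .
  qed
  finally have hf: "hfun wc nu u = (1 - E)\<^sup>2 + 2 * E * (1 - c)" .
  have "2/9 * (1 - c) \<le> hfun wc nu u"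
  proof (cases "E \<ge> 1/9")
    case True
    have "2/9 * (1 - c) \<le> 2 * E * (1 - c)" using True c1 by (intro mult_right_mono) auto
    moreover have "0 \<le> (1 - E)\<^sup>2" by simp
    ultimately show ?thesis using hf by linarith
  next
    case False
    have "(8/9)\<^sup>2 \<le> (1 - E)\<^sup>2" using False by (intro power_mono) auto
    moreover have "0 \<le> 2 * E * (1 - c)" using E0 c1 by simp
    ultimately show ?thesis using hf c1 by (simp add: power2_eq_square)
  qed
  then show ?thesis by (simp add: c_def)
qed

lemma int_cos:
  fixes wc t :: real
  assumes "wc > 0" "0 \<le> t"
  shows "integral {0..t} (\<lambda>u. 1 - cos (wc * u)) = t - sin (wc * t) / wc"
proof -
  have "((\<lambda>u. 1 - cos (wc * u)) has_integral
        ((\<lambda>u. u - sin (wc * u) / wc) t - (\<lambda>u. u - sin (wc * u) / wc) 0)) {0..t}"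
  proof (rule fundamental_theorem_of_calculus[where f="\<lambda>u::real. u - sin (wc * u) / wc", OF assms(2)])
    fix x :: real
    have "((\<lambda>u. u - sin (wc * u) / wc) has_real_derivative (1 - cos (wc * x))) (at x within {0..t})"
      using assms by (auto intro!: derivative_eq_intros)
    then show "((\<lambda>u. u - sin (wc * u) / wc) has_vector_derivative (1 - cos (wc * x))) (at x within {0..t})"
      by (simp add: has_real_derivative_iff_has_vector_derivative)
  qed
  then show ?thesis by (simp add: integral_unique)
qed

lemma min_scale:
  fixes wc t :: real
  assumes "wc > 0" "0 \<le> t"
  shows "min (wc^3) wc * min (t^3) t \<le> min ((wc*t)^3) (wc*t)"
proof (cases "t \<le> 1")
  case True
  have t3: "t^3 \<le> t" using True assms power_le_imp_le_base[of t 3] 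
    by (metis less_eq_real_def mult_left_le numeral_3_eq_3 power.simps(2) power_Suc_le_self power_increasing_iff zero_le_power) 
  have m: "min (t^3) t = t^3" using t3 by simp
  have "min (wc^3) wc * t^3 \<le> wc^3 * t^3" using assms by (intro mult_right_mono) auto
  moreover have "min (wc^3) wc * t^3 \<le> wc * t"
  proof -
    have "min (wc^3) wc * t^3 \<le> wc * t^3" using assms by (intro mult_right_mono) auto
    also have "\<dots> \<le> wc * t" using t3 assms by (intro mult_left_mono) auto
    finally show ?thesis .
  qed
  ultimately show ?thesis unfolding m by (simp add: power_mult_distrib)
next
  case False
  have t3: "t \<le> t^3" using False by (simp add: power_increasing[of 1 3 t, simplified])
  have m: "min (t^3) t = t" using t3 by simp
  have "min (wc^3) wc * t \<le> wc^3 * t" using assms by (intro mult_right_mono) auto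
  also have "\<dots> \<le> wc^3 * t^3" using t3 assms by (intro mult_left_mono) auto
  finally have "min (wc^3) wc * t \<le> (wc*t)^3" by (simp add: power_mult_distrib)
  moreover have "min (wc^3) wc * t \<le> wc * t" using assms False by (intro mult_right_mono) auto
  ultimately show ?thesis unfolding m by simp
qed

lemma A_bound:
  fixes nu K t :: real
  assumes "nu > 0" "K \<ge> 0" "t \<ge> 0"
  shows "1/32 * min (nu * K * t^3) (K * t / nu) \<le> nu * integral {0..t} (gfun nu K)"
proof (cases "t = 0")
  case True then show ?thesis by simp
next
  case False
  then have t: "t > 0" using assms by simp
  define q where "q = t / (2 + nu * t)"
  have I: "(t - 0) / 2 * gfun nu K ((0 + t) / 2) \<le> integral {0..t} (gfun nu K)"
    using assms t by (intro int_lower gfun_cont gfun_nonneg gfun_mono) auto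
  have "K * ((t/2) / (1 + nu * (t/2)))\<^sup>2 \<le> gfun nu K (t/2)"
    using assms by (intro gfun_lower) auto
  moreover have "(t/2) / (1 + nu * (t/2)) = q" unfolding q_def by (simp add: field_simps)
  ultimately have g: "K * q\<^sup>2 \<le> gfun nu K (t/2)" by simp
  have I2: "t/2 * (K * q\<^sup>2) \<le> integral {0..t} (gfun nu K)"
  proof -
    have "t/2 * (K * q\<^sup>2) \<le> t/2 * gfun nu K (t/2)" using g t by (intro mult_left_mono) auto
    then show ?thesis using I by simp
  qed
  have "0 \<le> nu * t" using assms by simp
  then have pos: "0 < 2 + nu * t" by linarith
  show ?thesis
  proof (cases "nu * t \<le> 2")
    case True
    have "t / 4 \<le> q" unfolding q_def using True t pos by (intro divide_left_mono) auto
    then have "(t/4)\<^sup>2 \<le> q\<^sup>2" using t by (intro power_mono) auto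
    then have "t/2 * (K * (t/4)\<^sup>2) \<le> t/2 * (K * q\<^sup>2)" using t assms
      by (intro mult_left_mono) auto
    with I2 have "t/2 * (K * (t/4)\<^sup>2) \<le> integral {0..t} (gfun nu K)" by linarith
    then have "nu * (t/2 * (K * (t/4)\<^sup>2)) \<le> nu * integral {0..t} (gfun nu K)"
      using assms by (intro mult_left_mono) auto
    moreover have "nu * (t/2 * (K * (t/4)\<^sup>2)) = 1/32 * (nu * K * t^3)"
      by (simp add: power2_eq_square power3_eq_cube)
    moreover have "min (nu * K * t^3) (K * t / nu) \<le> nu * K * t^3" by simp
    ultimately show ?thesis by linarith
  next
    case False
    have "t / (2 * nu * t) \<le> q" unfolding q_def using False t pos assms by (intro divide_left_mono) auto
    moreover have "t / (2 * nu * t) = 1 / (2 * nu)" using t by simp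
    ultimately have "1 / (2 * nu) \<le> q" by simp
    then have "(1 / (2 * nu))\<^sup>2 \<le> q\<^sup>2" using assms by (intro power_mono) auto
    then have "t/2 * (K * (1 / (2 * nu))\<^sup>2) \<le> t/2 * (K * q\<^sup>2)" using t assms
      by (intro mult_left_mono) auto
    with I2 have "t/2 * (K * (1 / (2 * nu))\<^sup>2) \<le> integral {0..t} (gfun nu K)" by linarith
    then have "nu * (t/2 * (K * (1 / (2 * nu))\<^sup>2)) \<le> nu * integral {0..t} (gfun nu K)"
      using assms by (intro mult_left_mono) auto
    moreover have "nu * (t/2 * (K * (1 / (2 * nu))\<^sup>2)) = 1/8 * (K * t / nu)"
      using assms by (simp add: power2_eq_square field_simps)
    moreover have "0 \<le> K * t / nu" using assms by simp
    moreover have "min (nu * K * t^3) (K * t / nu) \<le> K * t / nu" by simp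
    ultimately show ?thesis by linarith
  qed
qed

lemma B_bound:
  fixes wc nu t :: real
  assumes "wc > 0" "nu > 0" "t \<ge> 0"
  shows "2/135 * min (wc^3) wc / wc * min (t^3) t \<le> integral {0..t} (hfun wc nu)"
proof -
  have int1: "(\<lambda>u. 2/9 * (1 - cos (wc * u))) integrable_on {0..t}"
    by (intro integrable_continuous_interval continuous_intros)
  have int2: "hfun wc nu integrable_on {0..t}"
    by (intro integrable_continuous_interval continuous_on_subset[OF hfun_cont]) auto
  have "integral {0..t} (\<lambda>u. 2/9 * (1 - cos (wc * u))) \<le> integral {0..t} (hfun wc nu)"
    using int1 int2 assms by (intro integral_le hfun_lower) auto
  moreover have "integral {0..t} (\<lambda>u. 2/9 * (1 - cos (wc * u))) = 2/9 * (t - sin (wc * t) / wc)"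
    using int_cos[OF assms(1,3)] integral_mult_right[of "{0..t}" "2/9" "\<lambda>u. 1 - cos (wc * u)"] by simp
  moreover have "t - sin (wc * t) / wc = (wc * t - sin (wc * t)) / wc" using assms by (simp add: field_simps)
  moreover have "min ((wc*t)^3) (wc*t) / 15 \<le> wc * t - sin (wc * t)" using assms by (intro x_sin) simp
  moreover have "min (wc^3) wc * min (t^3) t \<le> min ((wc*t)^3) (wc*t)" using assms by (intro min_scale)
  ultimately have "2/9 * ((min (wc^3) wc * min (t^3) t) / 15 / wc) \<le> integral {0..t} (hfun wc nu)"
  proof -
    assume a: "integral {0..t} (\<lambda>u. 2/9 * (1 - cos (wc * u))) \<le> integral {0..t} (hfun wc nu)"
      "integral {0..t} (\<lambda>u. 2/9 * (1 - cos (wc * u))) = 2/9 * (t - sin (wc * t) / wc)"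
      "t - sin (wc * t) / wc = (wc * t - sin (wc * t)) / wc"
      "min ((wc*t)^3) (wc*t) / 15 \<le> wc * t - sin (wc * t)"
      "min (wc^3) wc * min (t^3) t \<le> min ((wc*t)^3) (wc*t)"
    have "(min (wc^3) wc * min (t^3) t) / 15 / wc \<le> (wc * t - sin (wc * t)) / wc"
      using a(4,5) assms by (intro divide_right_mono) auto
    moreover have e: "2/9 * (t - sin (wc * t) / wc) \<le> integral {0..t} (hfun wc nu)"
      using a(1) a(2) by linarith
    then have "2/9 * ((wc * t - sin (wc * t)) / wc) \<le> integral {0..t} (hfun wc nu)"
      by (simp only: a(3))
    moreover have "2/9 * ((min (wc^3) wc * min (t^3) t) / 15 / wc) \<le> 2/9 * ((wc * t - sin (wc * t)) / wc)"
      using calculation(1) by (rule mult_left_mono) simp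
    ultimately show ?thesis by (meson order_trans)
  qed
  moreover have "2/135 * min (wc^3) wc / wc * min (t^3) t = 2/9 * ((min (wc^3) wc * min (t^3) t) / 15 / wc)"
    by simp
  ultimately show ?thesis by linarith
qed

lemma S_rep:
  fixes nu t :: real
  assumes "nu > 0" "t \<ge> 0"
  shows "dampS wc nu t k1 k2 k3 =
    exp (- (nu * integral {0..t} (gfun nu ((real_of_int k3)\<^sup>2))
         + (nu * (real_of_int k1 ^ 2 + real_of_int k2 ^ 2) / (nu\<^sup>2 + wc\<^sup>2)) * integral {0..t} (hfun wc nu)))"
proof -
  have 1: "integral {0..t} (\<lambda>s. (real_of_int k3)\<^sup>2 * ((1 - exp (- nu * (t - s))) / nu)\<^sup>2)
      = integral {0..t} (gfun nu ((real_of_int k3)\<^sup>2))"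
    using rev_int[OF gfun_cont[OF assms(1)] assms(2), of "(real_of_int k3)\<^sup>2"] by (simp add: gfun_def)
  have 2: "integral {0..t} (\<lambda>s. (1 - cos (wc * (t - s)) * exp (- nu * (t - s)))\<^sup>2
                 + exp (- 2 * nu * (t - s)) * (sin (wc * (t - s)))\<^sup>2)
      = integral {0..t} (hfun wc nu)"
    using rev_int[OF hfun_cont assms(2), of wc nu] by (simp add: hfun_def)
  show ?thesis unfolding dampS_def 1 2 by (simp add: exp_add[symmetric])
qed

lemma S_pos_bound:
  fixes wc nu t :: real
  assumes wc: "wc > 0" and nu: "0 < nu" "nu < 1" and t: "0 \<le> t"
  shows "dampS wc nu t k1 k2 k3 \<le>
           exp (- min (1/32) (2/135 * min (wc^3) wc / wc / (1 + wc^2)) * min (nu * (real_of_int k3)\<^sup>2 * t ^ 3) ((real_of_int k3)\<^sup>2 * t / nu))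
         * exp (- min (1/32) (2/135 * min (wc^3) wc / wc / (1 + wc^2)) * nu * (real_of_int k1 ^ 2 + real_of_int k2 ^ 2) * min (t ^ 3) t)"
proof -
  define K where "K = (real_of_int k3)\<^sup>2"
  define Kp where "Kp = real_of_int k1 ^ 2 + real_of_int k2 ^ 2"
  define m where "m = min (wc^3) wc"
  define dB where "dB = 2/135 * m / wc / (1 + wc^2)"
  define d where "d = min (1/32) dB"
  define IG where "IG = integral {0..t} (gfun nu K)"
  define IH where "IH = integral {0..t} (hfun wc nu)"
  define c where "c = nu * Kp / (nu\<^sup>2 + wc\<^sup>2)"
  have K0: "K \<ge> 0" and Kp0: "Kp \<ge> 0" unfolding K_def Kp_def by simp_all
  have m0: "m > 0" unfolding m_def using wc by simp
  have dB0: "dB > 0" unfolding dB_def using m0 wc by (simp add: add_pos_nonneg)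
  have d1: "d \<le> 1/32" and d2: "d \<le> dB" and d0: "d > 0" unfolding d_def using dB0 by auto
  have rep: "dampS wc nu t k1 k2 k3 = exp (- (nu * IG + c * IH))"
    using S_rep[OF nu(1) t, of wc k1 k2 k3] unfolding IG_def IH_def c_def K_def Kp_def by simp
  define M1 where "M1 = min (nu * K * t ^ 3) (K * t / nu)"
  define M2 where "M2 = min (t ^ 3) t"
  have M10: "0 \<le> M1" unfolding M1_def using nu t K0 by simp
  have M20: "0 \<le> M2" unfolding M2_def using t by simp
  have A: "1/32 * M1 \<le> nu * IG" unfolding M1_def IG_def using A_bound[OF nu(1) K0 t] .
  have "d * M1 \<le> 1/32 * M1" using d1 M10 by (intro mult_right_mono) auto
  with A have A': "d * M1 \<le> nu * IG" by linarith
  have B: "2/135 * m / wc * M2 \<le> IH" unfolding M2_def IH_def m_def using B_bound[OF wc nu(1) t] .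
  have c_lb: "nu * Kp / (1 + wc\<^sup>2) \<le> c"
  proof -
    have "nu\<^sup>2 \<le> 1" using nu by (simp add: power_le_one)
    then have "nu\<^sup>2 + wc\<^sup>2 \<le> 1 + wc\<^sup>2" by simp
    moreover have "0 < nu\<^sup>2 + wc\<^sup>2" using wc by (simp add: add_nonneg_pos)
    moreover have "0 \<le> nu * Kp" using nu Kp0 by simp
    ultimately show ?thesis unfolding c_def by (intro divide_left_mono) auto
  qed
  have B0: "0 \<le> 2/135 * m / wc * M2" using m0 wc M20 by simp
  have "nu * Kp / (1 + wc\<^sup>2) * (2/135 * m / wc * M2) \<le> c * IH"
  proof -
    have "nu * Kp / (1 + wc\<^sup>2) * (2/135 * m / wc * M2) \<le> c * (2/135 * m / wc * M2)"
      using c_lb B0 by (intro mult_right_mono) auto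
    also have "\<dots> \<le> c * IH" using B c_lb nu Kp0 by (intro mult_left_mono) (auto intro: order_trans[rotated])
    finally show ?thesis .
  qed
  moreover have "nu * Kp / (1 + wc\<^sup>2) * (2/135 * m / wc * M2) = dB * nu * Kp * M2"
    unfolding dB_def by (simp add: field_simps)
  moreover have "d * nu * Kp * M2 \<le> dB * nu * Kp * M2"
    using d2 nu Kp0 M20 by (intro mult_right_mono) auto
  ultimately have B': "d * nu * Kp * M2 \<le> c * IH" by linarith
  have "dampS wc nu t k1 k2 k3 = exp (- (nu * IG)) * exp (- (c * IH))"
    unfolding rep by (simp add: exp_add[symmetric])
  also have "\<dots> \<le> exp (- d * M1) * exp (- d * nu * Kp * M2)"
    using A' B' by (intro mult_mono) auto
  finally show ?thesis unfolding d_def dB_def m_def M1_def M2_def K_def Kp_def by simp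
qed

lemma S_strict:
  fixes wc nu :: real
  assumes wc: "wc > 0" and nu: "0 < nu" and k3: "k3 \<noteq> 0"
  shows "strict_antimono_on {0..} (\<lambda>t. dampS wc nu t k1 k2 k3)"
proof (rule monotone_onI)
  fix a b :: real
  assume a: "a \<in> {0..}" and b: "b \<in> {0..}" and ab: "a < b"
  define K where "K = (real_of_int k3)\<^sup>2"
  define c where "c = nu * (real_of_int k1 ^ 2 + real_of_int k2 ^ 2) / (nu\<^sup>2 + wc\<^sup>2)"
  have K0: "K > 0" unfolding K_def using k3 by simp
  have c0: "c \<ge> 0" unfolding c_def using nu by simp
  have ra: "dampS wc nu a k1 k2 k3 = exp (- (nu * integral {0..a} (gfun nu K) + c * integral {0..a} (hfun wc nu)))"
    using S_rep[OF nu, of a wc k1 k2 k3] a unfolding K_def c_def by simp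
  have rb: "dampS wc nu b k1 k2 k3 = exp (- (nu * integral {0..b} (gfun nu K) + c * integral {0..b} (hfun wc nu)))"
    using S_rep[OF nu, of b wc k1 k2 k3] b unfolding K_def c_def by simp
  have a0: "0 \<le> a" using a by simp
  have gI: "\<And>u v. gfun nu K integrable_on {u..v}"
    by (intro integrable_continuous_interval continuous_on_subset[OF gfun_cont[OF nu]]) auto
  have split: "integral {0..b} (gfun nu K) = integral {0..a} (gfun nu K) + integral {a..b} (gfun nu K)"
    using Henstock_Kurzweil_Integration.integral_combine[where a=0 and c=a and b=b and f="gfun nu K"] gI a0 ab by simp
  have "(b - a) / 2 * gfun nu K ((a + b) / 2) \<le> integral {a..b} (gfun nu K)"
    using nu K0 a0 ab by (intro int_lower gfun_cont gfun_nonneg gfun_mono) auto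
  moreover have "0 < (b - a) / 2 * gfun nu K ((a + b) / 2)"
    using ab a0 nu K0 by (intro mult_pos_pos gfun_pos) auto
  ultimately have "integral {0..a} (gfun nu K) < integral {0..b} (gfun nu K)" using split by linarith
  then have g: "nu * integral {0..a} (gfun nu K) < nu * integral {0..b} (gfun nu K)" using nu by simp
  have "integral {0..a} (hfun wc nu) \<le> integral {0..b} (hfun wc nu)"
    using a0 ab by (intro int_mono hfun_cont hfun_nonneg) auto
  then have h: "c * integral {0..a} (hfun wc nu) \<le> c * integral {0..b} (hfun wc nu)"
    using c0 by (intro mult_left_mono) auto
  show "dampS wc nu b k1 k2 k3 < dampS wc nu a k1 k2 k3"
    unfolding ra rb using g h by simp
qed

theorem mainTheorem7:
  fixes wc :: real
  assumes "wc > 0"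
  shows "\<exists>nu1 > 0. \<exists>delta0 > 0. \<forall>nu. 0 < nu \<and> nu < nu1 \<longrightarrow>
           (\<forall>k1 k2 k3 :: int. k3 \<noteq> 0 \<longrightarrow>
              strict_antimono_on {0..} (\<lambda>t. dampS wc nu t k1 k2 k3) \<and>
              (\<forall>t \<ge> 0.
                 0 < dampS wc nu t k1 k2 k3 \<and>
                 dampS wc nu t k1 k2 k3 \<le>
                   exp (- delta0 * min (nu * (real_of_int k3)\<^sup>2 * t ^ 3) ((real_of_int k3)\<^sup>2 * t / nu))
                 * exp (- delta0 * nu * (real_of_int k1 ^ 2 + real_of_int k2 ^ 2) * min (t ^ 3) t)))"
proof -
  define d where "d = min (1/32) (2/135 * min (wc^3) wc / wc / (1 + wc^2))"
  have d0: "d > 0" unfolding d_def using assms by (simp add: add_pos_nonneg)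
  have pos: "0 < dampS wc nu t k1 k2 k3" for nu t k1 k2 k3
    unfolding dampS_def by simp
  show ?thesis
  proof (rule exI[of _ "1::real"], rule conjI, simp, rule exI[of _ d], rule conjI, rule d0, intro allI impI conjI)
    fix nu :: real and k1 k2 k3 :: int and t :: real
    assume nu: "0 < nu \<and> nu < 1" and k3: "k3 \<noteq> 0"
    show "strict_antimono_on {0..} (\<lambda>t. dampS wc nu t k1 k2 k3)"
      using S_strict[OF assms _ k3] nu by simp
    assume t: "0 \<le> t"
    show "0 < dampS wc nu t k1 k2 k3" by (rule pos)
    show "dampS wc nu t k1 k2 k3 \<le>
                   exp (- d * min (nu * (real_of_int k3)\<^sup>2 * t ^ 3) ((real_of_int k3)\<^sup>2 * t / nu))
                 * exp (- d * nu * (real_of_int k1 ^ 2 + real_of_int k2 ^ 2) * min (t ^ 3) t)"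
      unfolding d_def using S_pos_bound[OF assms _ _ t] nu by simp
  qed
qed

end
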